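(* Let $A\in\mathbb R^{m\times n}$, $B\in\mathbb R^{d\times n}$ with $m\ge n$, $d\ge n$, and $B$ of full column rank $n$. Let $A=U\Gamma Y^T$, $B=V\Sigma Y^T$ be a reduced GSVD of $(A,B)$ as in the context, and let $1\le k<n$ with $\gamma_1/\sigma_1>\gamma_2/\sigma_2>\dots>\gamma_k/\sigma_k>\gamma_{k+1}/\sigma_{k+1}$. Define $s_A=\mathrm{DEIM}(U_k)$, $s_B=\mathrm{DEIM}(V_k)$, $p=\mathrm{DEIM}(Y_k)$, where $U_k,V_k,Y_k$ are the first $k$ columns of $U,V,Y$. (i) Let $G=AB^{+}$ (which equals $AB^{-1}$ when $B$ is square). Then $\sigma_i>0$ for all $i$, $G=U(\Gamma\Sigma^{-1})V^T$ is a (reduced) singular value decomposition of $G$, and if $W_k$ and $Z_k$ denote any matrices of $k$ dominant left and right singular vectors of $G$, then $\mathrm{DEIM}(W_k)=s_A$ and $\mathrm{DEIM}(Z_k)=s_B$. (ii) If $d=n$ and $B=I_n$, then, with $W_k$ and $Z_k$ any matrices of $k$ dominant left and right singular vectors of $A$, $\mathrm{DEIM}(W_k)=s_A$ and $\mathrm{DEIM}(Z_k)=p$; consequently the factors $C=AP$ and $R=S_A^TA$ (with $P=I_n(:,p)$, $S_A=I_m(:,s_A)$) of the GCUR of $A$ coincide with those of the DEIM-CUR decomposition of $A$.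
   Context: Reduced GSVD: $U\in\mathbb R^{m\times n}$, $V\in\mathbb R^{d\times n}$ have orthonormal columns, $Y\in\mathbb R^{n\times n}$ is nonsingular, $\Gamma=\mathrm{diag}(\gamma_i)$, $\Sigma=\mathrm{diag}(\sigma_i)$ with $\gamma_i,\sigma_i\in[0,1]$, $\gamma_i^2+\sigma_i^2=1$, ordered so that $\gamma_i/\sigma_i$ is nonincreasing, and $A=U\Gamma Y^T$, $B=V\Sigma Y^T$. $B^+$ is the Moore–Penrose pseudoinverse. DEIM index selection: for a matrix $X=[\mathbf x_1,\dots,\mathbf x_k]\in\mathbb R^{N\times k}$ with linearly independent columns, $\mathrm{DEIM}(X)=(s_1,\dots,s_k)$ is defined by: $s_1$ is the smallest index $i$ maximizing $|\mathbf x_1(i)|$; for $j=2,\dots,k$, with $X_{j-1}=[\mathbf x_1,\dots,\mathbf x_{j-1}]$ and $S_{j-1}=I_N(:,(s_1,\dots,s_{j-1}))$, set $\mathbf r_j=\mathbf x_j-X_{j-1}(S_{j-1}^TX_{j-1})^{-1}S_{j-1}^T\mathbf x_j$ and let $s_j$ be the smallest index $i$ maximizing $|\mathbf r_j(i)|$. (Here $I_N(:,s)$ is the matrix of columns of the identity indexed by $s$.) The DEIM-CUR decomposition of a matrix $A$ uses row indices $\mathrm{DEIM}(W_k)$ and column indices $\mathrm{DEIM}(Z_k)$ for the dominant left/right singular vectors $W_k,Z_k$; the GCUR of $(A,B)$ uses column indices $p$ for both $A$ and $B$, row indices $s_A$ for $A$ and $s_B$ for $B$. *)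

theory Defs
  imports "Jordan_Normal_Form.Gauss_Jordan_Elimination" "Jordan_Normal_Form.DL_Rank"
begin

(* Matrices are Jordan_Normal_Form matrices ('a mat); indices are 0-based. *)

definition first_cols :: "real mat \<Rightarrow> nat \<Rightarrow> real mat" where
  "first_cols X k = mat (dim_row X) k (\<lambda>(i,j). X $$ (i,j))"

definition sel_mat :: "nat \<Rightarrow> nat list \<Rightarrow> real mat" where
  "sel_mat N s = mat N (length s) (\<lambda>(i,j). if i = s ! j then 1 else 0)"

definition inv_mat :: "real mat \<Rightarrow> real mat" where
  "inv_mat M = (case mat_inverse M of Some Mi \<Rightarrow> Mi | None \<Rightarrow> 0\<^sub>m (dim_col M) (dim_row M))"

definition first_argmax_abs :: "real vec \<Rightarrow> nat" where
  "first_argmax_abs r = (LEAST i. i < dim_vec r \<and> (\<forall>j < dim_vec r. \<bar>r $ j\<bar> \<le> \<bar>r $ i\<bar>))"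

fun deim_aux :: "real mat \<Rightarrow> nat \<Rightarrow> nat list" where
  "deim_aux X 0 = []"
| "deim_aux X (Suc j) =
     (let s = deim_aux X j;
          Xj = first_cols X j;
          S = sel_mat (dim_row X) s;
          x = col X j;
          r = x - Xj *\<^sub>v (inv_mat (S\<^sup>T * Xj) *\<^sub>v (S\<^sup>T *\<^sub>v x))
      in s @ [first_argmax_abs r])"

definition DEIM :: "real mat \<Rightarrow> nat list" where
  "DEIM X = deim_aux X (dim_col X)"

definition diag_mat :: "nat \<Rightarrow> (nat \<Rightarrow> real) \<Rightarrow> real mat" where
  "diag_mat n f = mat n n (\<lambda>(i,j). if i = j then f i else 0)"

definition pinv :: "real mat \<Rightarrow> real mat" where
  "pinv M = (THE X. X \<in> carrier_mat (dim_col M) (dim_row M) \<and>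
                    M * X * M = M \<and> X * M * X = X \<and>
                    (M * X)\<^sup>T = M * X \<and> (X * M)\<^sup>T = X * M)"

definition is_svd :: "real mat \<Rightarrow> real mat \<Rightarrow> real mat \<Rightarrow> real mat \<Rightarrow> bool" where
  "is_svd G W S Z \<longleftrightarrow> (\<exists>r.
      W \<in> carrier_mat (dim_row G) r \<and> Z \<in> carrier_mat (dim_col G) r \<and>
      S \<in> carrier_mat r r \<and>
      W\<^sup>T * W = 1\<^sub>m r \<and> Z\<^sup>T * Z = 1\<^sub>m r \<and>
      (\<forall>i<r. \<forall>j<r. i \<noteq> j \<longrightarrow> S $$ (i,j) = 0) \<and>
      (\<forall>i<r. 0 \<le> S $$ (i,i)) \<and>
      (\<forall>i j. i \<le> j \<and> j < r \<longrightarrow> S $$ (j,j) \<le> S $$ (i,i)) \<and>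
      G = W * S * Z\<^sup>T)"

definition dominant_sing_vecs :: "real mat \<Rightarrow> nat \<Rightarrow> real mat \<Rightarrow> real mat \<Rightarrow> bool" where
  "dominant_sing_vecs G k Wk Zk \<longleftrightarrow> (\<exists>W S Z. is_svd G W S Z \<and> k \<le> dim_col W \<and>
      Wk = first_cols W k \<and> Zk = first_cols Z k)"

definition is_reduced_gsvd ::
  "real mat \<Rightarrow> real mat \<Rightarrow> real mat \<Rightarrow> real mat \<Rightarrow> real mat \<Rightarrow> (nat \<Rightarrow> real) \<Rightarrow> (nat \<Rightarrow> real) \<Rightarrow> bool" where
  "is_reduced_gsvd A B U V Y gam sig \<longleftrightarrow> (
     let m = dim_row A; n = dim_col A; d = dim_row B in
     B \<in> carrier_mat d n \<and>
     U \<in> carrier_mat m n \<and> V \<in> carrier_mat d n \<and> Y \<in> carrier_mat n n \<and>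
     U\<^sup>T * U = 1\<^sub>m n \<and> V\<^sup>T * V = 1\<^sub>m n \<and> invertible_mat Y \<and>
     (\<forall>i<n. 0 \<le> gam i \<and> gam i \<le> 1 \<and> 0 \<le> sig i \<and> sig i \<le> 1 \<and>
            (gam i)\<^sup>2 + (sig i)\<^sup>2 = 1) \<and>
     (\<comment> \<open>gam i / sig i nonincreasing (as extended reals, gam/0 = infinity)\<close>
      \<forall>i. i + 1 < n \<longrightarrow> gam (i+1) * sig i \<le> gam i * sig (i+1)) \<and>
     A = U * diag_mat n gam * Y\<^sup>T \<and> B = V * diag_mat n sig * Y\<^sup>T)"

end

theory Submission
  imports Defs
begin


lemma diag_mat_carrier[simp]: "diag_mat n f \<in> carrier_mat n n"
  by (simp add: diag_mat_def)
lemma diag_mat_dims[simp]: "dim_row (diag_mat n f) = n" "dim_col (diag_mat n f) = n"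
  by (simp_all add: diag_mat_def)
lemma diag_mat_index: "i < n \<Longrightarrow> j < n \<Longrightarrow> diag_mat n f $$ (i,j) = (if i = j then f i else 0)"
  by (simp add: diag_mat_def)

lemma mult_diag_right_index:
  assumes "A \<in> carrier_mat r n" "i < r" "j < n"
  shows "(A * diag_mat n f) $$ (i,j) = A $$ (i,j) * f j"
proof -
  have "(A * diag_mat n f) $$ (i,j) = (\<Sum>l<n. A $$ (i,l) * (if l = j then f l else 0))"
    using assms by (simp add: scalar_prod_def diag_mat_index atLeast0LessThan cong: if_cong)
  also have "\<dots> = (\<Sum>l<n. if l = j then A $$ (i,j) * f j else 0)"
    by (rule sum.cong) auto
  also have "\<dots> = A $$ (i,j) * f j" using assms by simp
  finally show ?thesis .
qed

lemma mult_diag_left_index: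
  assumes "A \<in> carrier_mat n r" "i < n" "j < r"
  shows "(diag_mat n f * A) $$ (i,j) = f i * A $$ (i,j)"
proof -
  have "(diag_mat n f * A) $$ (i,j) = (\<Sum>l<n. (if i = l then f i else 0) * A $$ (l,j))"
    using assms by (simp add: scalar_prod_def diag_mat_index atLeast0LessThan cong: if_cong)
  also have "\<dots> = (\<Sum>l<n. if l = i then f i * A $$ (i,j) else 0)"
    by (rule sum.cong) auto
  also have "\<dots> = f i * A $$ (i,j)" using assms by simp
  finally show ?thesis .
qed

lemma diag_mult_diag: "diag_mat n f * diag_mat n g = diag_mat n (\<lambda>i. f i * g i)"
  by (rule eq_matI) (subst mult_diag_right_index[of _ n n], auto simp: diag_mat_index)

lemma diag_one: "(\<forall>i<n. f i = 1) \<Longrightarrow> diag_mat n f = 1\<^sub>m n"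
  by (rule eq_matI) (auto simp: diag_mat_index)

lemma diag_transpose[simp]: "transpose_mat (diag_mat n f) = diag_mat n f"
  by (rule eq_matI) (auto simp: diag_mat_index)

lemma diag_inv: "(\<forall>i<n. f i \<noteq> 0) \<Longrightarrow> diag_mat n f * diag_mat n (\<lambda>i. 1 / f i) = 1\<^sub>m n"
  by (simp add: diag_mult_diag diag_one)
lemma diag_inv': "(\<forall>i<n. f i \<noteq> 0) \<Longrightarrow> diag_mat n (\<lambda>i. 1 / f i) * diag_mat n f = 1\<^sub>m n"
  by (simp add: diag_mult_diag diag_one)

lemma first_cols_carrier[simp]: "first_cols X k \<in> carrier_mat (dim_row X) k"
  by (simp add: first_cols_def)
lemma first_cols_dims[simp]: "dim_row (first_cols X k) = dim_row X" "dim_col (first_cols X k) = k"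
  by (simp_all add: first_cols_def)

lemma first_cols_scale:
  assumes X: "X \<in> carrier_mat N K" and j: "j \<le> K"
  shows "first_cols (X * diag_mat K c) j = first_cols X j * diag_mat j c"
proof (rule eq_matI)
  fix i l assume i: "i < dim_row (first_cols X j * diag_mat j c)" and l: "l < dim_col (first_cols X j * diag_mat j c)"
  have 1: "(X * diag_mat K c) $$ (i,l) = X$$(i,l) * c l"
    by (rule mult_diag_right_index[OF X]) (use i l j X in auto)
  have 2: "(first_cols X j * diag_mat j c) $$ (i,l) = first_cols X j $$ (i,l) * c l"
    by (rule mult_diag_right_index[OF first_cols_carrier]) (use i l j X in auto)
  show "first_cols (X * diag_mat K c) j $$ (i, l) = (first_cols X j * diag_mat j c) $$ (i, l)"
    using 1 2 i l j X by (simp add: first_cols_def)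
qed (use X in auto)

lemma col_scale:
  assumes X: "X \<in> carrier_mat N K" and j: "j < K"
  shows "col (X * diag_mat K c) j = c j \<cdot>\<^sub>v col X j"
proof (rule eq_vecI)
  fix i assume i: "i < dim_vec (c j \<cdot>\<^sub>v col X j)"
  have 1: "(X * diag_mat K c) $$ (i,j) = X$$(i,j) * c j"
    by (rule mult_diag_right_index[OF X]) (use i j X in auto)
  show "col (X * diag_mat K c) j $ i = (c j \<cdot>\<^sub>v col X j) $ i"
    using 1 i j X by simp
qed (use X in auto)

lemma sel_mat_carrier[simp]: "sel_mat N s \<in> carrier_mat N (length s)"
  by (simp add: sel_mat_def)

lemma length_deim_aux[simp]: "length (deim_aux X j) = j"
  by (induction j) (simp_all add: Let_def)

lemma units_of_inverse:
  assumes "M \<in> carrier_mat n n" "Mi \<in> carrier_mat n n" "M * Mi = 1\<^sub>m n" "Mi * M = 1\<^sub>m n"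
  shows "M \<in> Units (ring_mat TYPE(real) n b)"
  using assms unfolding Units_def ring_mat_def by auto

lemma inv_mat_scale:
  assumes M: "M \<in> carrier_mat n n" and c: "\<forall>i<n. c i \<noteq> 0"
  shows "inv_mat (M * diag_mat n c) = diag_mat n (\<lambda>i. 1 / c i) * inv_mat M"
proof -
  let ?D = "diag_mat n c" let ?Di = "diag_mat n (\<lambda>i. 1 / c i)"
  have MD: "M * ?D \<in> carrier_mat n n" using M by simp
  show ?thesis
  proof (cases "mat_inverse M")
    case None
    have nu: "M \<notin> Units (ring_mat TYPE(real) n (undefined::unit))" using mat_inverse(1)[OF M None] .
    have "mat_inverse (M * ?D) = None"
    proof (rule ccontr)
      assume "mat_inverse (M * ?D) \<noteq> None"
      then obtain B where B: "mat_inverse (M * ?D) = Some B" by auto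
      note Bp = mat_inverse(2)[OF MD B]
      have Bc: "B \<in> carrier_mat n n" using Bp by auto
      have "M * (?D * B) = 1\<^sub>m n" using Bp by (simp add: assoc_mult_mat[OF M diag_mat_carrier Bc, symmetric])
      moreover have "(?D * B) * M = 1\<^sub>m n"
      proof -
        have BMc: "B * M \<in> carrier_mat n n" using Bc M by simp
        have "B * M * ?D = 1\<^sub>m n" using Bp assoc_mult_mat[OF Bc M diag_mat_carrier] by simp
        hence "B * M * ?D * ?Di = ?Di" by simp
        hence BM: "B * M = ?Di" using assoc_mult_mat[OF BMc diag_mat_carrier diag_mat_carrier] diag_inv[OF c] BMc right_mult_one_mat[OF BMc] by simp
        have "(?D * B) * M = ?D * (B * M)" using assoc_mult_mat[OF diag_mat_carrier Bc M] .
        also have "\<dots> = 1\<^sub>m n" using BM diag_inv[OF c] by simp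
        finally show ?thesis .
      qed
      ultimately have "M \<in> Units (ring_mat TYPE(real) n (undefined::unit))"
        using units_of_inverse[OF M _ ] Bc by (meson mult_carrier_mat diag_mat_carrier)
      with nu show False by simp
    qed
    then show ?thesis using None M by (simp add: inv_mat_def)
  next
    case (Some Mi)
    note Mp = mat_inverse(2)[OF M Some]
    have Mic: "Mi \<in> carrier_mat n n" using Mp by auto
    have DiMi: "?Di * Mi \<in> carrier_mat n n" using Mic by (rule mult_carrier_mat[OF diag_mat_carrier])
    have Dc: "?D \<in> carrier_mat n n" and Dic: "?Di \<in> carrier_mat n n" by auto
    have K1: "M * ?D * (?Di * Mi) = 1\<^sub>m n"
    proof -
      have "?D * (?Di * Mi) = Mi"
        using assoc_mult_mat[OF Dc Dic Mic] diag_inv[OF c] Mic by simp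
      then show ?thesis using assoc_mult_mat[OF M Dc DiMi] Mp by simp
    qed
    have K2: "?Di * Mi * (M * ?D) = 1\<^sub>m n"
    proof -
      have "Mi * (M * ?D) = ?D"
        using assoc_mult_mat[OF Mic M Dc] Mp by simp
      then show ?thesis using assoc_mult_mat[OF Dic Mic MD] diag_inv'[OF c] by simp
    qed
    have u: "M * ?D \<in> Units (ring_mat TYPE(real) n (undefined::unit))"
      by (rule units_of_inverse[OF MD DiMi K1 K2])
    have nn: "mat_inverse (M * ?D) \<noteq> None"
    proof
      assume N: "mat_inverse (M * ?D) = None"
      have "M * ?D \<notin> Units (ring_mat TYPE(real) n (undefined::unit))" by (rule mat_inverse(1)[OF MD N])
      with u show False by simp
    qed
    obtain B where B: "mat_inverse (M * ?D) = Some B"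
      using nn by (cases "mat_inverse (M * ?D)") auto
    note Bp = mat_inverse(2)[OF MD B]
    have Bc: "B \<in> carrier_mat n n" using Bp by auto
    have "B = B * (M * ?D * (?Di * Mi))" using K1 Bc by simp
    also have "\<dots> = (B * (M * ?D)) * (?Di * Mi)" using assoc_mult_mat[OF Bc MD DiMi] by simp
    also have "\<dots> = ?Di * Mi" using Bp DiMi by simp
    finally show ?thesis using B Some by (simp add: inv_mat_def)
  qed
qed

lemma inv_mat_carrier: assumes M: "M \<in> carrier_mat n n" shows "inv_mat M \<in> carrier_mat n n"
proof (cases "mat_inverse M")
  case None then show ?thesis using M by (auto simp: inv_mat_def)
next
  case (Some Mi)
  then show ?thesis using mat_inverse(2)[OF M Some] Some by (auto simp: inv_mat_def)
qed

lemma first_argmax_abs_smult: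
  assumes c: "(c::real) \<noteq> 0"
  shows "first_argmax_abs (c \<cdot>\<^sub>v r) = first_argmax_abs r"
proof -
  have key: "\<bar>c*a\<bar> \<le> \<bar>c*b\<bar> \<longleftrightarrow> \<bar>a\<bar> \<le> \<bar>b\<bar>" for a b
    using c by (simp add: abs_mult)
  show ?thesis unfolding first_argmax_abs_def
  proof (rule arg_cong[where f=Least], rule ext)
    fix i
    show "(i < dim_vec (c \<cdot>\<^sub>v r) \<and> (\<forall>j<dim_vec (c \<cdot>\<^sub>v r). \<bar>(c \<cdot>\<^sub>v r) $ j\<bar> \<le> \<bar>(c \<cdot>\<^sub>v r) $ i\<bar>)) =
          (i < dim_vec r \<and> (\<forall>j<dim_vec r. \<bar>r $ j\<bar> \<le> \<bar>r $ i\<bar>))"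
      using key by auto
  qed
qed

lemma smult_minus_vec: "x \<in> carrier_vec N \<Longrightarrow> w \<in> carrier_vec N \<Longrightarrow> (c::real) \<cdot>\<^sub>v x - c \<cdot>\<^sub>v w = c \<cdot>\<^sub>v (x - w)"
  by (rule eq_vecI) (auto simp: algebra_simps)

lemma deim_aux_scale:
  assumes X: "X \<in> carrier_mat N K" and c: "\<forall>j<K. c j \<noteq> 0"
  shows "j \<le> K \<Longrightarrow> deim_aux (X * diag_mat K c) j = deim_aux X j"
proof (induction j)
  case 0 then show ?case by simp
next
  case (Suc j)
  then have j: "j < K" by simp
  have IH: "deim_aux (X * diag_mat K c) j = deim_aux X j" using Suc by simp
  define s where "s = deim_aux X j"
  define Xj where "Xj = first_cols X j"
  define S where "S = sel_mat N s"
  define x where "x = col X j"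
  define M where "M = transpose_mat S * Xj"
  define Dj where "Dj = diag_mat j c"
  define Dij where "Dij = diag_mat j (\<lambda>i. 1 / c i)"
  define Mi where "Mi = inv_mat M"
  have cj: "\<forall>i<j. c i \<noteq> 0" using c j by auto
  have Xjc: "Xj \<in> carrier_mat N j" using first_cols_carrier[of X j] X by (simp add: Xj_def)
  have Sc: "S \<in> carrier_mat N j" using sel_mat_carrier[of N s] by (simp add: S_def s_def)
  have STc: "transpose_mat S \<in> carrier_mat j N" using Sc by simp
  have xc: "x \<in> carrier_vec N" using X j by (simp add: x_def)
  have Mc: "M \<in> carrier_mat j j" using STc Xjc by (simp add: M_def)
  have Mic: "Mi \<in> carrier_mat j j" using inv_mat_carrier[OF Mc] by (simp add: Mi_def)
  have Djc: "Dj \<in> carrier_mat j j" and Dijc: "Dij \<in> carrier_mat j j" by (simp_all add: Dj_def Dij_def)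
  have dr: "dim_row (X * diag_mat K c) = N" using X by simp
  have fc: "first_cols (X * diag_mat K c) j = Xj * Dj"
    using first_cols_scale[OF X, of j c] j by (simp add: Xj_def Dj_def)
  have cx: "col (X * diag_mat K c) j = c j \<cdot>\<^sub>v x"
    using col_scale[OF X j] by (simp add: x_def)
  have M': "transpose_mat S * (Xj * Dj) = M * Dj"
    using assoc_mult_mat[OF STc Xjc Djc] by (simp add: M_def)
  have iM': "inv_mat (M * Dj) = Dij * Mi"
    using inv_mat_scale[OF Mc cj] by (simp add: Dj_def Dij_def Mi_def)
  define y where "y = transpose_mat S *\<^sub>v x"
  have yc: "y \<in> carrier_vec j" using STc xc by (simp add: y_def)
  have Miy: "Mi *\<^sub>v y \<in> carrier_vec j" using Mic yc by simp
  have "(Xj * Dj) *\<^sub>v ((Dij * Mi) *\<^sub>v (transpose_mat S *\<^sub>v (c j \<cdot>\<^sub>v x)))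
        = (Xj * Dj) *\<^sub>v ((Dij * Mi) *\<^sub>v (c j \<cdot>\<^sub>v y))"
    using mult_mat_vec[OF STc xc] by (simp add: y_def)
  also have "\<dots> = c j \<cdot>\<^sub>v ((Xj * Dj) *\<^sub>v ((Dij * Mi) *\<^sub>v y))"
    using mult_mat_vec[of "Dij * Mi" j j y "c j"] mult_mat_vec[of "Xj * Dj" N j "(Dij * Mi) *\<^sub>v y" "c j"]
      Dijc Mic Xjc Djc yc by simp
  also have "(Xj * Dj) *\<^sub>v ((Dij * Mi) *\<^sub>v y) = Xj *\<^sub>v (Dj *\<^sub>v (Dij *\<^sub>v (Mi *\<^sub>v y)))"
    using assoc_mult_mat_vec[OF Xjc Djc, of "(Dij * Mi) *\<^sub>v y"] assoc_mult_mat_vec[OF Dijc Mic yc]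
      Dijc Mic yc by simp
  also have "Dj *\<^sub>v (Dij *\<^sub>v (Mi *\<^sub>v y)) = Mi *\<^sub>v y"
    using assoc_mult_mat_vec[OF Djc Dijc Miy, symmetric] diag_inv[OF cj] Miy by (simp add: Dj_def Dij_def)
  finally have key: "(Xj * Dj) *\<^sub>v ((Dij * Mi) *\<^sub>v (transpose_mat S *\<^sub>v (c j \<cdot>\<^sub>v x)))
      = c j \<cdot>\<^sub>v (Xj *\<^sub>v (Mi *\<^sub>v y))" .
  have r: "c j \<cdot>\<^sub>v x - c j \<cdot>\<^sub>v (Xj *\<^sub>v (Mi *\<^sub>v y)) = c j \<cdot>\<^sub>v (x - Xj *\<^sub>v (Mi *\<^sub>v y))"
    by (rule smult_minus_vec[OF xc]) (use Xjc Miy in simp)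
  have dX: "dim_row X = N" using X by simp
  have "deim_aux (X * diag_mat K c) (Suc j) = s @ [first_argmax_abs (c j \<cdot>\<^sub>v x - (Xj * Dj) *\<^sub>v (inv_mat (transpose_mat S * (Xj * Dj)) *\<^sub>v (transpose_mat S *\<^sub>v (c j \<cdot>\<^sub>v x))))]"
    by (simp add: Let_def IH dr fc cx s_def S_def dX)
  also have "\<dots> = s @ [first_argmax_abs (x - Xj *\<^sub>v (Mi *\<^sub>v y))]"
    using M' iM' key r first_argmax_abs_smult c j by simp
  also have "\<dots> = deim_aux X (Suc j)"
    by (simp add: Let_def s_def Xj_def S_def x_def M_def Mi_def y_def dX)
  finally show ?case .
qed

lemma DEIM_scale:
  assumes X: "X \<in> carrier_mat N K" and c: "\<forall>j<K. c j \<noteq> 0"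
  shows "DEIM (X * diag_mat K c) = DEIM X"
  using deim_aux_scale[OF X c, of K] X by (simp add: DEIM_def)



lemma sum_single:
  assumes "i < (n::nat)" "\<forall>i'<n. i' \<noteq> i \<longrightarrow> g i' = (0::real)"
  shows "(\<Sum>i'<n. g i') = g i"
proof -
  have "(\<Sum>i'<n. g i') = (\<Sum>i'<n. if i' = i then g i' else 0)"
    by (rule sum.cong) (use assms in auto)
  also have "\<dots> = g i" using assms(1) by (simp add: sum.delta)
  finally show ?thesis .
qed

lemma combi:
  fixes f s :: "nat \<Rightarrow> real" and m nn :: "nat \<Rightarrow> nat \<Rightarrow> real"
  assumes f0: "\<forall>i<n. 0 \<le> f i" and fmono: "\<forall>i j. i \<le> j \<and> j < n \<longrightarrow> f j \<le> f i"
    and fgap: "\<forall>i<k. f (i+1) < f i" and kn: "k < n" and kr: "k \<le> r"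
    and s0: "\<forall>j<r. 0 \<le> s j" and smono: "\<forall>i j. i \<le> j \<and> j < r \<longrightarrow> s j \<le> s i"
    and E1: "\<forall>i<n. \<forall>j<r. f i * m i j = nn i j * s j"
    and E2: "\<forall>i<n. \<forall>j<r. f i * nn i j = m i j * s j"
    and E5: "\<forall>i<n. f i \<noteq> 0 \<longrightarrow> (\<Sum>l<r. m i l * m i l) = 1"
    and E6: "\<forall>j<r. \<forall>l<r. s l \<noteq> 0 \<longrightarrow> (\<Sum>i<n. m i j * m i l) = (if j = l then 1 else 0)"
  shows "\<forall>i<k. s i = f i \<and> (m i i = 1 \<or> m i i = -1) \<and> (\<forall>i'<n. i' \<noteq> i \<longrightarrow> m i' i = 0)"
proof -
  have fstrict: "f i' < f i" if "i < i'" "i' \<le> k" for i i'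
    using that
  proof (induction i')
    case 0 then show ?case by simp
  next
    case (Suc i')
    show ?case
    proof (cases "i = i'")
      case True then show ?thesis using fgap Suc by auto
    next
      case False
      then have "f i' < f i" using Suc by auto
      moreover have "f (Suc i') < f i'" using fgap Suc by auto
      ultimately show ?thesis by simp
    qed
  qed
  have fpos: "0 < f i" if "i < k" for i
  proof -
    have "f k < f i" using fstrict[of i k] that by simp
    moreover have "0 \<le> f k" using f0 kn by simp
    ultimately show ?thesis by simp
  qed
  have fdist: "f i' \<noteq> f i" if "i < k" "i' < n" "i' \<noteq> i" for i i'
  proof (cases "i' < i")
    case True then show ?thesis using fstrict[of i' i] that by simp
  next
    case False
    then have ii: "i < i'" using that by simp
    show ?thesis
    proof (cases "i' \<le> k")
      case True then show ?thesis using fstrict[of i i'] ii by simp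
    next
      case False
      then have "f i' \<le> f k" using fmono that by simp
      moreover have "f k < f i" using fstrict[of i k] that by simp
      ultimately show ?thesis by simp
    qed
  qed
  have fbelow: "i' < k" if "i' < n" "f k < f i'" for i'
  proof (rule ccontr)
    assume "\<not> i' < k"
    then have "f i' \<le> f k" using fmono that by simp
    with that show False by simp
  qed
  have sq: "f i = s j" if "i < n" "j < r" "m i j \<noteq> 0" for i j
  proof -
    have "f i * f i * m i j = s j * s j * m i j"
    proof -
      have "f i * f i * m i j = f i * (nn i j * s j)" using E1 that by (simp add: mult.assoc)
      also have "\<dots> = (f i * nn i j) * s j" by (simp add: mult.assoc)
      also have "\<dots> = s j * s j * m i j" using E2 that by simp
      finally show ?thesis .
    qed
    then have "f i * f i = s j * s j" using that by simp
    then have "f i ^ 2 = s j ^ 2" by (simp add: power2_eq_square)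
    then show ?thesis using f0 s0 that by (simp add: power2_eq_iff_nonneg)
  qed
  have nz: "\<exists>l<r'. g l \<noteq> 0" if "(\<Sum>l<r'. g l) = (1::real)" for g r'
  proof (rule ccontr)
    assume "\<not> ?thesis"
    then have "(\<Sum>l<r'. g l) = 0" by (intro sum.neutral) auto
    with that show False by simp
  qed
  have A: "\<exists>j<r. s j = f i" if "i < k" for i
  proof -
    have "(\<Sum>l<r. m i l * m i l) = 1" using E5 fpos[OF that] that kn by auto
    then obtain l where "l < r" "m i l * m i l \<noteq> 0" using nz by blast
    then show ?thesis using sq[of i l] that kn by auto
  qed
  have B: "(\<forall>i'<n. i' \<noteq> i \<longrightarrow> m i' j = 0) \<and> m i j * m i j = 1"
    if "i < k" "j < r" "s j = f i" for i j
  proof -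
    have z: "\<forall>i'<n. i' \<noteq> i \<longrightarrow> m i' j = 0"
    proof (intro allI impI)
      fix i' assume "i' < n" "i' \<noteq> i"
      show "m i' j = 0"
      proof (rule ccontr)
        assume "m i' j \<noteq> 0"
        then have "f i' = s j" using sq \<open>i' < n\<close> that by simp
        then show False using fdist[of i i'] that \<open>i' < n\<close> \<open>i' \<noteq> i\<close> by simp
      qed
    qed
    have "(\<Sum>i'<n. m i' j * m i' j) = 1" using E6 that fpos[OF that(1)] by auto
    moreover have "(\<Sum>i'<n. m i' j * m i' j) = m i j * m i j"
      by (rule sum_single) (use z that kn in auto)
    ultimately show ?thesis using z by simp
  qed
  have C: "j = j'" if "i < k" "j < r" "j' < r" "s j = f i" "s j' = f i" for i j j'
  proof (rule ccontr)
    assume ne: "j \<noteq> j'"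
    have "(\<Sum>i'<n. m i' j * m i' j') = 0" using E6 that fpos[OF that(1)] ne by auto
    moreover have "(\<Sum>i'<n. m i' j * m i' j') = m i j * m i j'"
      by (rule sum_single) (use B[of i j] that kn in auto)
    moreover have "m i j * m i j = 1" "m i j' * m i j' = 1" using B that by auto
    ultimately show False by (metis mult_eq_0_iff one_neq_zero)
  qed
  have D: "\<exists>i<k. s j = f i" if "j < r" "f k < s j" for j
  proof -
    have "0 \<le> f k" using f0 kn by simp
    then have "s j \<noteq> 0" using that by simp
    then have "(\<Sum>i<n. m i j * m i j) = 1" using E6 that by auto
    then obtain i where "i < n" "m i j * m i j \<noteq> 0" using nz by blast
    then have "f i = s j" using sq that by simp
    then show ?thesis using fbelow[of i] \<open>i < n\<close> that by auto
  qed
  have E: "s i = f i" if "i < k" for i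
    using that
  proof (induction i rule: less_induct)
    case (less i)
    obtain j where j: "j < r" "s j = f i" using A[OF less.prems] by blast
    consider "j < i" | "j = i" | "i < j" by linarith
    then show ?case
    proof cases
      case 1
      then have "s j = f j" using less by simp
      then show ?thesis using fdist[of i j] j 1 less kn by simp
    next
      case 2 then show ?thesis using j by simp
    next
      case 3
      have "s j \<le> s i" using smono[rule_format, of i j] j 3 by simp
      moreover have "f k < f i" using fstrict[of i k] less by simp
      ultimately have "f k < s i" using j by simp
      then obtain i' where i': "i' < k" "s i = f i'" using D[of i] less kr by auto
      consider "i' < i" | "i' = i" | "i < i'" by linarith
      then show ?thesis
      proof cases
        case 1
        then have "s i' = f i'" using less i' by simp
        then have "i' = i" using C[of i' i' i] i' 1 less kr by simp
        then show ?thesis using 1 by simp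
      next
        case 2 then show ?thesis using i' by simp
      next
        case 3
        have "f i' < f i" using fstrict[of i i'] 3 i' by simp
        then show ?thesis using i' \<open>s j \<le> s i\<close> j by simp
      qed
    qed
  qed
  show ?thesis
  proof (intro allI impI)
    fix i assume i: "i < k"
    have "m i i * m i i = 1" using B[of i i] E[OF i] i kr by simp
    then have "m i i = 1 \<or> m i i = -1"
      by (metis mult_cancel_left1 mult_minus1 mult_minus_left square_eq_1_iff)
    then show "s i = f i \<and> (m i i = 1 \<or> m i i = -1) \<and> (\<forall>i'<n. i' \<noteq> i \<longrightarrow> m i' i = 0)"
      using B[of i i] E[OF i] i kr by simp
  qed
qed


lemma assoc_dim: "dim_col (A::'a::semiring_0 mat) = dim_row B \<Longrightarrow> dim_col B = dim_row C \<Longrightarrow> (A * B) * C = A * (B * C)"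
  by (rule assoc_mult_mat[of A "dim_row A" "dim_col A" B "dim_col B" C "dim_col C"]) auto
lemma cancel_left_dim: "(P::'a::semiring_1 mat) * Q = 1\<^sub>m n \<Longrightarrow> dim_col P = dim_row Q \<Longrightarrow> dim_row X = n \<Longrightarrow> P * (Q * X) = X"
proof -
  assume a: "P * Q = 1\<^sub>m n" "dim_col P = dim_row Q" "dim_row X = n"
  have "dim_col Q = n" using arg_cong[OF a(1), of dim_col] by simp
  then show ?thesis by (subst assoc_dim[symmetric]) (use a in auto)
qed
lemma transpose_dim: "dim_col (A::'a::comm_semiring_0 mat) = dim_row B \<Longrightarrow> transpose_mat (A * B) = transpose_mat B * transpose_mat A"
  by (rule transpose_mult[of A "dim_row A" "dim_col A" B "dim_col B"]) auto

lemma mult_index_sum: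
  "i < dim_row A \<Longrightarrow> j < dim_col B \<Longrightarrow> dim_col A = dim_row B \<Longrightarrow>
   (A * B) $$ (i,j) = (\<Sum>l<dim_row B. A $$ (i,l) * B $$ (l,j))"
  by (simp add: scalar_prod_def atLeast0LessThan)

lemma svd_unique_cols:
  fixes G U V W S Z :: "real mat" and f :: "nat \<Rightarrow> real"
  assumes U: "U \<in> carrier_mat p n" and V: "V \<in> carrier_mat q n"
    and UU: "transpose_mat U * U = 1\<^sub>m n" and VV: "transpose_mat V * V = 1\<^sub>m n"
    and f0: "\<forall>i<n. 0 \<le> f i" and fmono: "\<forall>i j. i \<le> j \<and> j < n \<longrightarrow> f j \<le> f i"
    and fgap: "\<forall>i<k. f (i+1) < f i" and kn: "k < n"
    and G1: "G = U * diag_mat n f * transpose_mat V"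
    and svd: "is_svd G W S Z" and kW: "k \<le> dim_col W"
  shows "\<exists>c. (\<forall>j<k. c j \<noteq> 0) \<and> first_cols W k = first_cols U k * diag_mat k c
             \<and> first_cols Z k = first_cols V k * diag_mat k c"
proof -
  have dG: "dim_row G = p" "dim_col G = q" using U V G1 by auto
  obtain r where W: "W \<in> carrier_mat p r" and Z: "Z \<in> carrier_mat q r" and Sc: "S \<in> carrier_mat r r"
    and WW: "transpose_mat W * W = 1\<^sub>m r" and ZZ: "transpose_mat Z * Z = 1\<^sub>m r"
    and Soff: "\<forall>i<r. \<forall>j<r. i \<noteq> j \<longrightarrow> S $$ (i,j) = 0"
    and S0: "\<forall>i<r. 0 \<le> S $$ (i,i)" and Smono: "\<forall>i j. i \<le> j \<and> j < r \<longrightarrow> S $$ (j,j) \<le> S $$ (i,i)"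
    and G2: "G = W * S * transpose_mat Z"
    using svd dG unfolding is_svd_def by metis
  define s where "s i = S $$ (i,i)" for i
  have Sd: "S = diag_mat r s"
    by (rule eq_matI) (use Sc Soff in \<open>auto simp: diag_mat_index s_def\<close>)
  define D where "D = diag_mat n f"
  define Ds where "Ds = diag_mat r s"
  define M where "M = transpose_mat V * Z"
  define N where "N = transpose_mat U * W"
  have kr: "k \<le> r" using kW W by simp
  have G1': "G = U * D * transpose_mat V" using G1 by (simp add: D_def)
  have G2': "G = W * Ds * transpose_mat Z" using G2 Sd by (simp add: Ds_def)
  have d: "dim_row U = p" "dim_col U = n" "dim_row V = q" "dim_col V = n" "dim_row W = p" "dim_col W = r"
    "dim_row Z = q" "dim_col Z = r" "dim_row D = n" "dim_col D = n" "dim_row Ds = r" "dim_col Ds = r"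
    "dim_row G = p" "dim_col G = q"
    using U V W Z dG by (auto simp: D_def Ds_def)
  have DT: "transpose_mat D = D" "transpose_mat Ds = Ds" by (simp_all add: D_def Ds_def)
  have Gt1: "transpose_mat G = V * (D * transpose_mat U)"
    unfolding G1' by (simp add: d transpose_dim DT assoc_dim)
  have Gt2: "transpose_mat G = Z * (Ds * transpose_mat W)"
    unfolding G2' by (simp add: d transpose_dim DT assoc_dim)
  have Eq1: "D * M = N * Ds"
  proof -
    have "transpose_mat U * G * Z = D * M"
      unfolding G1' M_def by (simp add: d assoc_dim cancel_left_dim[OF UU])
    moreover have "transpose_mat U * G * Z = N * Ds"
      unfolding G2' N_def by (simp add: d assoc_dim ZZ cancel_left_dim[OF ZZ])
    ultimately show ?thesis by simp
  qed
  have Eq2: "D * N = M * Ds"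
  proof -
    have "transpose_mat V * transpose_mat G * W = D * N"
      unfolding Gt1 N_def by (simp add: d assoc_dim cancel_left_dim[OF VV])
    moreover have "transpose_mat V * transpose_mat G * W = M * Ds"
      unfolding Gt2 M_def by (simp add: d assoc_dim WW cancel_left_dim[OF WW])
    ultimately show ?thesis by simp
  qed
  have Eq3: "Z * Ds = V * (D * N)"
  proof -
    have "transpose_mat G * W = Z * Ds"
      unfolding Gt2 by (simp add: d assoc_dim WW cancel_left_dim[OF WW])
    moreover have "transpose_mat G * W = V * (D * N)"
      unfolding Gt1 N_def by (simp add: d assoc_dim)
    ultimately show ?thesis by simp
  qed
  have Eq4: "W * Ds = U * (D * M)"
  proof -
    have "G * Z = W * Ds"
      unfolding G2' by (simp add: d assoc_dim ZZ cancel_left_dim[OF ZZ])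
    moreover have "G * Z = U * (D * M)"
      unfolding G1' M_def by (simp add: d assoc_dim)
    ultimately show ?thesis by simp
  qed
  have Eq5: "M * transpose_mat M * D = D"
  proof -
    have a: "transpose_mat G * U = V * D"
      unfolding Gt1 by (simp add: d assoc_dim UU)
    have b: "Z * (transpose_mat Z * (transpose_mat G * U)) = transpose_mat G * U"
      unfolding Gt2 by (simp add: d assoc_dim cancel_left_dim[OF ZZ])
    have "M * transpose_mat M * D = transpose_mat V * (Z * (transpose_mat Z * (V * D)))"
      unfolding M_def by (simp add: d assoc_dim transpose_dim)
    also have "\<dots> = transpose_mat V * (V * D)" using a b by simp
    also have "\<dots> = D" by (simp add: d cancel_left_dim[OF VV])
    finally show ?thesis .
  qed
  have Eq6: "transpose_mat M * M * Ds = Ds"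
  proof -
    have a: "V * (transpose_mat V * (Z * Ds)) = Z * Ds"
      unfolding Eq3 by (simp add: d cancel_left_dim[OF VV])
    have "transpose_mat M * M * Ds = transpose_mat Z * (V * (transpose_mat V * (Z * Ds)))"
      unfolding M_def by (simp add: d assoc_dim transpose_dim)
    also have "\<dots> = transpose_mat Z * (Z * Ds)" using a by simp
    also have "\<dots> = Ds" by (simp add: d cancel_left_dim[OF ZZ])
    finally show ?thesis .
  qed
  have Mc: "M \<in> carrier_mat n r" and Nc: "N \<in> carrier_mat n r"
    using U V W Z by (auto simp: M_def N_def)
  have fpos: "0 < f i" if "i < k" for i
    using fgap f0 that kn by (metis add_less_cancel_right le_less_trans less_trans_Suc order.strict_trans2 Suc_eq_plus1 Suc_lessI)
  have E1: "\<forall>i<n. \<forall>j<r. f i * M $$ (i,j) = N $$ (i,j) * s j"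
  proof (intro allI impI)
    fix i j assume ij: "i < n" "j < r"
    have "(D * M) $$ (i,j) = f i * M $$ (i,j)" unfolding D_def by (rule mult_diag_left_index[OF Mc ij])
    moreover have "(N * Ds) $$ (i,j) = N $$ (i,j) * s j" unfolding Ds_def by (rule mult_diag_right_index[OF Nc ij])
    ultimately show "f i * M $$ (i,j) = N $$ (i,j) * s j" using Eq1 by simp
  qed
  have E2: "\<forall>i<n. \<forall>j<r. f i * N $$ (i,j) = M $$ (i,j) * s j"
  proof (intro allI impI)
    fix i j assume ij: "i < n" "j < r"
    have "(D * N) $$ (i,j) = f i * N $$ (i,j)" unfolding D_def by (rule mult_diag_left_index[OF Nc ij])
    moreover have "(M * Ds) $$ (i,j) = M $$ (i,j) * s j" unfolding Ds_def by (rule mult_diag_right_index[OF Mc ij])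
    ultimately show "f i * N $$ (i,j) = M $$ (i,j) * s j" using Eq2 by simp
  qed
  have E5: "\<forall>i<n. f i \<noteq> 0 \<longrightarrow> (\<Sum>l<r. M $$ (i,l) * M $$ (i,l)) = 1"
  proof (intro allI impI)
    fix i assume i: "i < n" and fi: "f i \<noteq> 0"
    have MMc: "M * transpose_mat M \<in> carrier_mat n n" using Mc by simp
    have "(M * transpose_mat M * D) $$ (i,i) = (M * transpose_mat M) $$ (i,i) * f i"
      unfolding D_def by (rule mult_diag_right_index[OF MMc i i])
    moreover have "(M * transpose_mat M) $$ (i,i) = (\<Sum>l<r. M $$ (i,l) * M $$ (i,l))"
      using Mc i by (subst mult_index_sum) auto
    moreover have "D $$ (i,i) = f i" using i by (simp add: D_def diag_mat_index)
    ultimately show "(\<Sum>l<r. M $$ (i,l) * M $$ (i,l)) = 1" using Eq5 fi by simp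
  qed
  have E6: "\<forall>j<r. \<forall>l<r. s l \<noteq> 0 \<longrightarrow> (\<Sum>i<n. M $$ (i,j) * M $$ (i,l)) = (if j = l then 1 else 0)"
  proof (intro allI impI)
    fix j l assume j: "j < r" and l: "l < r" and sl: "s l \<noteq> 0"
    have MMc: "transpose_mat M * M \<in> carrier_mat r r" using Mc by simp
    have "(transpose_mat M * M * Ds) $$ (j,l) = (transpose_mat M * M) $$ (j,l) * s l"
      unfolding Ds_def by (rule mult_diag_right_index[OF MMc j l])
    moreover have "(transpose_mat M * M) $$ (j,l) = (\<Sum>i<n. M $$ (i,j) * M $$ (i,l))"
      using Mc j l by (subst mult_index_sum) auto
    moreover have "Ds $$ (j,l) = (if j = l then s l else 0)" using j l by (simp add: Ds_def diag_mat_index)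
    ultimately show "(\<Sum>i<n. M $$ (i,j) * M $$ (i,l)) = (if j = l then 1 else 0)"
      using Eq6 sl by (auto split: if_splits)
  qed
  have s0: "\<forall>j<r. 0 \<le> s j" using S0 by (simp add: s_def)
  have smono: "\<forall>i j. i \<le> j \<and> j < r \<longrightarrow> s j \<le> s i" using Smono by (simp add: s_def)
  have CB: "\<forall>i<k. s i = f i \<and> (M $$ (i,i) = 1 \<or> M $$ (i,i) = -1) \<and> (\<forall>i'<n. i' \<noteq> i \<longrightarrow> M $$ (i',i) = 0)"
    by (rule combi[OF f0 fmono fgap kn kr s0 smono E1 E2 E5 E6])
  define c where "c i = M $$ (i,i)" for i
  have colZ: "Z $$ (a,i) = V $$ (a,i) * c i" if a: "a < q" and i: "i < k" for a i
  proof -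
    have ir: "i < r" using i kr by simp
    have "Z $$ (a,i) * s i = (Z * Ds) $$ (a,i)"
      unfolding Ds_def by (rule mult_diag_right_index[OF Z a ir, symmetric])
    also have "\<dots> = (V * (D * N)) $$ (a,i)" using Eq3 by simp
    also have "\<dots> = (\<Sum>i'<n. V $$ (a,i') * (D * N) $$ (i',i))"
      using V Nc a ir by (subst mult_index_sum) (auto simp: D_def)
    also have "\<dots> = (\<Sum>i'<n. V $$ (a,i') * (M $$ (i',i) * s i))"
    proof (rule sum.cong)
      fix i' assume "i' \<in> {..<n}"
      then have "(D * N) $$ (i',i) = f i' * N $$ (i',i)"
        unfolding D_def using mult_diag_left_index[OF Nc _ ir] by simp
      then show "V $$ (a,i') * (D * N) $$ (i',i) = V $$ (a,i') * (M $$ (i',i) * s i)"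
        using E2 \<open>i' \<in> {..<n}\<close> ir by simp
    qed simp
    also have "\<dots> = V $$ (a,i) * (M $$ (i,i) * s i)"
      by (rule sum_single) (use CB i kn in auto)
    finally have "Z $$ (a,i) * s i = V $$ (a,i) * c i * s i" by (simp add: c_def)
    moreover have "s i \<noteq> 0" using CB fpos i by fastforce
    ultimately show ?thesis by simp
  qed
  have colW: "W $$ (a,i) = U $$ (a,i) * c i" if a: "a < p" and i: "i < k" for a i
  proof -
    have ir: "i < r" using i kr by simp
    have "W $$ (a,i) * s i = (W * Ds) $$ (a,i)"
      unfolding Ds_def by (rule mult_diag_right_index[OF W a ir, symmetric])
    also have "\<dots> = (U * (D * M)) $$ (a,i)" using Eq4 by simp
    also have "\<dots> = (\<Sum>i'<n. U $$ (a,i') * (D * M) $$ (i',i))"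
      using U Mc a ir by (subst mult_index_sum) (auto simp: D_def)
    also have "\<dots> = (\<Sum>i'<n. U $$ (a,i') * (f i' * M $$ (i',i)))"
    proof (rule sum.cong)
      fix i' assume "i' \<in> {..<n}"
      then have "(D * M) $$ (i',i) = f i' * M $$ (i',i)"
        unfolding D_def using mult_diag_left_index[OF Mc _ ir] by simp
      then show "U $$ (a,i') * (D * M) $$ (i',i) = U $$ (a,i') * (f i' * M $$ (i',i))"
        by simp
    qed simp
    also have "\<dots> = U $$ (a,i) * (f i * M $$ (i,i))"
      by (rule sum_single) (use CB i kn in auto)
    finally have "W $$ (a,i) * s i = U $$ (a,i) * c i * s i" using CB i by (simp add: c_def)
    moreover have "s i \<noteq> 0" using CB fpos i by fastforce
    ultimately show ?thesis by simp
  qed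
  have cnz: "\<forall>j<k. c j \<noteq> 0" using CB by (auto simp: c_def)
  have FW: "first_cols W k = first_cols U k * diag_mat k c"
  proof (rule eq_matI)
    fix a i assume a: "a < dim_row (first_cols U k * diag_mat k c)" and i: "i < dim_col (first_cols U k * diag_mat k c)"
    have a': "a < p" and i': "i < k" using a i U by auto
    have "(first_cols U k * diag_mat k c) $$ (a,i) = first_cols U k $$ (a,i) * c i"
      by (rule mult_diag_right_index) (use U a' i' in auto)
    then show "first_cols W k $$ (a, i) = (first_cols U k * diag_mat k c) $$ (a, i)"
      using colW[OF a' i'] a' i' U W by (simp add: first_cols_def)
  qed (use U W in auto)
  have FZ: "first_cols Z k = first_cols V k * diag_mat k c"
  proof (rule eq_matI)
    fix a i assume a: "a < dim_row (first_cols V k * diag_mat k c)" and i: "i < dim_col (first_cols V k * diag_mat k c)"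
    have a': "a < q" and i': "i < k" using a i V by auto
    have "(first_cols V k * diag_mat k c) $$ (a,i) = first_cols V k $$ (a,i) * c i"
      by (rule mult_diag_right_index) (use V a' i' in auto)
    then show "first_cols Z k $$ (a, i) = (first_cols V k * diag_mat k c) $$ (a, i)"
      using colZ[OF a' i'] a' i' V Z by (simp add: first_cols_def)
  qed (use V Z in auto)
  show ?thesis using cnz FW FZ by blast
qed



lemma (in vec_space) nondistinct_rank_lt:
  assumes "A \<in> carrier_mat n nc" and "\<not> distinct (cols A)"
  shows "rank A < nc"
proof -
  obtain S where "maximal S (\<lambda>T. T \<subseteq> set (cols A) \<and> lin_indpt T)"
    using maximal_exists[of "(\<lambda>T. T \<subseteq> set (cols A) \<and> lin_indpt T)" "card (set (cols A))" "{}"]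
    by (meson List.finite_set card_mono empty_iff empty_subsetI finite_lin_indpt2 rev_finite_subset)
  then have "card S \<le> card (set (cols A))" by (simp add: card_mono maximal_def)
  then have "card S < nc"
    using assms(1) cols_length card_length \<open>\<not> distinct (cols A)\<close> card_distinct carrier_matD(2) nat_less_le
    by (metis dual_order.antisym dual_order.trans)
  then show ?thesis
    using rank_card_indpt[OF \<open>A \<in> carrier_mat n nc\<close> \<open>maximal S (\<lambda>T. T \<subseteq> set (cols A) \<and> lin_indpt T)\<close>]
    by simp
qed

lemma (in vec_space) kernel_rank_lt:
  assumes A: "A \<in> carrier_mat n nc" and v: "v \<in> carrier_vec nc" "v \<noteq> 0\<^sub>v nc" "A *\<^sub>v v = 0\<^sub>v n"
  shows "rank A < nc"
proof (cases "distinct (cols A)")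
  case True
  have dep: "lin_dep (set (cols A))" by (rule lin_depI[OF A v True])
  have "rank A \<le> nc" by (rule rank_le_nc[OF A])
  moreover have "rank A \<noteq> nc"
  proof
    assume "rank A = nc"
    then have "lin_indpt (set (cols A))" using full_rank_lin_indpt[OF A _ True] by simp
    with dep show False by simp
  qed
  ultimately show ?thesis by simp
next
  case False then show ?thesis by (rule nondistinct_rank_lt[OF A])
qed

lemma penrose_unique:
  fixes M X X' :: "real mat"
  assumes M: "M \<in> carrier_mat a b" and X: "X \<in> carrier_mat b a" and X': "X' \<in> carrier_mat b a"
    and P1: "M * X * M = M" and P2: "X * M * X = X" and P3: "transpose_mat (M * X) = M * X"
    and P4: "transpose_mat (X * M) = X * M"
    and P1': "M * X' * M = M" and P2': "X' * M * X' = X'" and P3': "transpose_mat (M * X') = M * X'"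
    and P4': "transpose_mat (X' * M) = X' * M"
  shows "X = X'"
proof -
  have d: "dim_row M = a" "dim_col M = b" "dim_row X = b" "dim_col X = a" "dim_row X' = b" "dim_col X' = a"
    using M X X' by auto
  have Q3: "transpose_mat X * transpose_mat M = M * X" using P3 by (simp add: transpose_dim d)
  have Q4: "transpose_mat M * transpose_mat X = X * M" using P4 by (simp add: transpose_dim d)
  have Q3': "transpose_mat X' * transpose_mat M = M * X'" using P3' by (simp add: transpose_dim d)
  have Q4': "transpose_mat M * transpose_mat X' = X' * M" using P4' by (simp add: transpose_dim d)
  have R2: "X * (M * X) = X" using P2 by (simp add: assoc_dim d)
  have R2': "X' * (M * X') = X'" using P2' by (simp add: assoc_dim d)
  have s2: "transpose_mat M = transpose_mat M * (M * X')"
  proof -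
    have "transpose_mat M = transpose_mat (M * X' * M)" using P1' by simp
    also have "\<dots> = transpose_mat M * (transpose_mat X' * transpose_mat M)" by (simp add: transpose_dim d)
    also have "\<dots> = transpose_mat M * (M * X')" using Q3' by simp
    finally show ?thesis .
  qed
  have s5: "transpose_mat M = X * (M * transpose_mat M)"
  proof -
    have "transpose_mat M = transpose_mat (M * X * M)" using P1 by simp
    also have "\<dots> = (transpose_mat M * transpose_mat X) * transpose_mat M" by (simp add: transpose_dim d assoc_dim)
    also have "\<dots> = (X * M) * transpose_mat M" using Q4 by simp
    also have "\<dots> = X * (M * transpose_mat M)" by (simp add: assoc_dim d)
    finally show ?thesis .
  qed
  have s3: "X = X * (M * X')"
  proof -
    have "X = X * (transpose_mat X * transpose_mat M)" using R2 Q3 by simp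
    also have "\<dots> = X * (transpose_mat X * (transpose_mat M * (M * X')))" using s2 by metis
    also have "\<dots> = X * ((transpose_mat X * transpose_mat M) * (M * X'))" by (simp add: assoc_dim d)
    also have "\<dots> = X * ((M * X) * (M * X'))" using Q3 by simp
    also have "\<dots> = (X * (M * X)) * (M * X')" by (simp add: assoc_dim d)
    also have "\<dots> = X * (M * X')" using R2 by simp
    finally show ?thesis .
  qed
  have s6: "X' = X * (M * X')"
  proof -
    have "X' = (X' * M) * X'" using R2' by (simp add: assoc_dim d)
    also have "\<dots> = (transpose_mat M * transpose_mat X') * X'" using Q4' by simp
    also have "\<dots> = (X * (M * transpose_mat M)) * transpose_mat X' * X'" using s5 by metis
    also have "\<dots> = X * (M * ((transpose_mat M * transpose_mat X') * X'))" by (simp add: assoc_dim d)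
    also have "\<dots> = X * (M * ((X' * M) * X'))" using Q4' by simp
    also have "\<dots> = X * (M * X')" using R2' by (simp add: assoc_dim d)
    finally show ?thesis .
  qed
  show ?thesis using s3 s6 by simp
qed

lemma pinv_eq:
  fixes M X :: "real mat"
  assumes M: "M \<in> carrier_mat a b" and X: "X \<in> carrier_mat b a"
    and P1: "M * X * M = M" and P2: "X * M * X = X" and P3: "transpose_mat (M * X) = M * X"
    and P4: "transpose_mat (X * M) = X * M"
  shows "pinv M = X"
  unfolding pinv_def
proof (rule the_equality)
  show "X \<in> carrier_mat (dim_col M) (dim_row M) \<and> M * X * M = M \<and> X * M * X = X \<and>
        transpose_mat (M * X) = M * X \<and> transpose_mat (X * M) = X * M"
    using assms by auto
  fix X' assume "X' \<in> carrier_mat (dim_col M) (dim_row M) \<and> M * X' * M = M \<and> X' * M * X' = X' \<and>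
        transpose_mat (M * X') = M * X' \<and> transpose_mat (X' * M) = X' * M"
  then show "X' = X" using penrose_unique[OF M X, of X'] assms by auto
qed



lemma mono_from_adj:
  fixes f :: "nat \<Rightarrow> real"
  assumes "\<forall>i. i + 1 < n \<longrightarrow> f (i+1) \<le> f i"
  shows "\<forall>i j. i \<le> j \<and> j < n \<longrightarrow> f j \<le> f i"
proof (intro allI impI)
  fix i j assume "i \<le> j \<and> j < n"
  then show "f j \<le> f i"
  proof (induction j)
    case 0 then show ?case by simp
  next
    case (Suc j)
    show ?case
    proof (cases "i = Suc j")
      case True then show ?thesis by simp
    next
      case False
      then have "f j \<le> f i" using Suc by simp
      moreover have "f (Suc j) \<le> f j" using assms Suc by simp
      ultimately show ?thesis by simp
    qed
  qed
qed

theorem mainTheorem2: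
  fixes A B U V Y :: "real mat" and gam sig :: "nat \<Rightarrow> real" and m n d k :: nat
  assumes A: "A \<in> carrier_mat m n" and B: "B \<in> carrier_mat d n"
    and mn: "m \<ge> n" and dn: "d \<ge> n"
    and rankB: "vec_space.rank d B = n"
    and gsvd: "is_reduced_gsvd A B U V Y gam sig"
    and k: "1 \<le> k" "k < n"
    and gap: "\<forall>i<k. gam (i+1) * sig i < gam i * sig (i+1)"
  shows
   "(\<forall>i<n. sig i > 0) \<and>
    is_svd (A * pinv B) U (diag_mat n (\<lambda>i. gam i / sig i)) V \<and>
    (\<forall>Wk Zk. dominant_sing_vecs (A * pinv B) k Wk Zk \<longrightarrow>
        DEIM Wk = DEIM (first_cols U k) \<and> DEIM Zk = DEIM (first_cols V k)) \<and>
    (d = n \<and> B = 1\<^sub>m n \<longrightarrow>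
      (\<forall>Wk Zk. dominant_sing_vecs A k Wk Zk \<longrightarrow>
        DEIM Wk = DEIM (first_cols U k) \<and> DEIM Zk = DEIM (first_cols Y k) \<and>
        A * sel_mat n (DEIM (first_cols Y k)) = A * sel_mat n (DEIM Zk) \<and>
        (sel_mat m (DEIM (first_cols U k)))\<^sup>T * A = (sel_mat m (DEIM Wk))\<^sup>T * A))"
proof -
  have dA: "dim_row A = m" "dim_col A = n" and dB: "dim_row B = d" using A B by auto
  have U: "U \<in> carrier_mat m n" and V: "V \<in> carrier_mat d n" and Y: "Y \<in> carrier_mat n n"
    and UU: "transpose_mat U * U = 1\<^sub>m n" and VV: "transpose_mat V * V = 1\<^sub>m n"
    and Yinv: "invertible_mat Y"
    and gs: "\<forall>i<n. 0 \<le> gam i \<and> gam i \<le> 1 \<and> 0 \<le> sig i \<and> sig i \<le> 1 \<and> (gam i)\<^sup>2 + (sig i)\<^sup>2 = 1"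
    and ord: "\<forall>i. i + 1 < n \<longrightarrow> gam (i+1) * sig i \<le> gam i * sig (i+1)"
    and Aeq: "A = U * diag_mat n gam * transpose_mat Y"
    and Beq: "B = V * diag_mat n sig * transpose_mat Y"
    using gsvd dA dB unfolding is_reduced_gsvd_def Let_def by auto
  obtain Yi where YYi: "Y * Yi = 1\<^sub>m n" and YiY: "Yi * Y = 1\<^sub>m n" and Yic: "Yi \<in> carrier_mat n n"
  proof -
    obtain Yi where a: "Y * Yi = 1\<^sub>m (dim_row Y)" "Yi * Y = 1\<^sub>m (dim_row Yi)"
      using Yinv unfolding invertible_mat_def inverts_mat_def by blast
    have "dim_col Yi = n" using arg_cong[OF a(1), of dim_col] Y by simp
    moreover have "dim_row Yi = n" using arg_cong[OF a(2), of dim_col] Y by simp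
    ultimately show thesis using that a Y by auto
  qed
  define Ds where "Ds = diag_mat n sig"
  define Dg where "Dg = diag_mat n gam"
  define Si where "Si = diag_mat n (\<lambda>i. 1 / sig i)"
  have d: "dim_row U = m" "dim_col U = n" "dim_row V = d" "dim_col V = n" "dim_row Y = n" "dim_col Y = n"
    "dim_row Yi = n" "dim_col Yi = n" "dim_row Ds = n" "dim_col Ds = n" "dim_row Dg = n" "dim_col Dg = n"
    "dim_row Si = n" "dim_col Si = n"
    using U V Y Yic by (auto simp: Ds_def Dg_def Si_def)
  have YT: "transpose_mat Y * transpose_mat Yi = 1\<^sub>m n"
    using arg_cong[OF YiY, of transpose_mat] by (simp add: transpose_dim d)
  have YiT: "transpose_mat Yi * transpose_mat Y = 1\<^sub>m n"
    using arg_cong[OF YYi, of transpose_mat] by (simp add: transpose_dim d)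
  have sigpos: "\<forall>i<n. sig i > 0"
  proof (rule ccontr)
    assume "\<not> (\<forall>i<n. sig i > 0)"
    then obtain i0 where i0: "i0 < n" "sig i0 = 0" using gs by force
    define v where "v = transpose_mat Yi *\<^sub>v unit_vec n i0"
    have vc: "v \<in> carrier_vec n" using Yic by (simp add: v_def)
    have "transpose_mat Y *\<^sub>v v = unit_vec n i0"
      unfolding v_def using assoc_mult_mat_vec[of "transpose_mat Y" n n "transpose_mat Yi" n "unit_vec n i0"] Y Yic YT
      by simp
    moreover have "transpose_mat Y *\<^sub>v 0\<^sub>v n = 0\<^sub>v n" by (rule eq_vecI) (use Y in auto)
    ultimately have vnz: "v \<noteq> 0\<^sub>v n" using i0 unit_vec_nonzero[OF i0(1)] by metis
    have BYi: "B * transpose_mat Yi = V * Ds"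
      unfolding Beq Ds_def[symmetric] by (simp add: d assoc_dim YT cancel_left_dim[OF YT] right_mult_one_mat)
    have "B *\<^sub>v v = (V * Ds) *\<^sub>v unit_vec n i0"
      unfolding v_def BYi[symmetric] using assoc_mult_mat_vec[of B d n "transpose_mat Yi" n "unit_vec n i0"] B Yic
      by simp
    also have "\<dots> = 0\<^sub>v d"
    proof (rule eq_vecI)
      fix a assume "a < dim_vec (0\<^sub>v d)"
      then have a: "a < d" by simp
      have "((V * Ds) *\<^sub>v unit_vec n i0) $ a = (V * Ds) $$ (a, i0)"
        using a i0 V by (simp add: Ds_def)
      also have "\<dots> = V $$ (a, i0) * sig i0" unfolding Ds_def by (rule mult_diag_right_index[OF V a i0(1)])
      finally show "((V * Ds) *\<^sub>v unit_vec n i0) $ a = 0\<^sub>v d $ a" using i0 a by simp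
    qed (use V in auto)
    finally have "B *\<^sub>v v = 0\<^sub>v d" .
    then have "vec_space.rank d B < n" using vec_space.kernel_rank_lt[OF B vc vnz] by simp
    with rankB show False by simp
  qed
  have signz: "\<forall>i<n. sig i \<noteq> 0" using sigpos by force
  define X0 where "X0 = transpose_mat Yi * Si * transpose_mat V"
  have YSc: "transpose_mat Yi * Si \<in> carrier_mat n n"
    by (rule mult_carrier_mat[of _ n n]) (use Yic in \<open>auto simp: Si_def\<close>)
  have X0c: "X0 \<in> carrier_mat n d" unfolding X0_def
    by (rule mult_carrier_mat[OF YSc]) (use V in auto)
  have SiDs: "Si * Ds = 1\<^sub>m n" unfolding Si_def Ds_def by (rule diag_inv'[OF signz])
  have DsSi: "Ds * Si = 1\<^sub>m n" unfolding Si_def Ds_def by (rule diag_inv[OF signz])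
  have BX0: "B * X0 = V * transpose_mat V"
    unfolding Beq Ds_def[symmetric] X0_def
    by (simp add: d assoc_dim YT cancel_left_dim[OF YT] cancel_left_dim[OF DsSi])
  have X0B: "X0 * B = 1\<^sub>m n"
    unfolding Beq Ds_def[symmetric] X0_def
    by (simp add: d assoc_dim cancel_left_dim[OF VV] cancel_left_dim[OF SiDs] YiT)
  have pinvB: "pinv B = X0"
  proof (rule pinv_eq[OF B X0c])
    show "B * X0 * B = B" using B X0c X0B by (simp add: assoc_dim dB d)
    show "X0 * B * X0 = X0" using X0B X0c by simp
    show "transpose_mat (B * X0) = B * X0" using BX0 by (simp add: transpose_dim d)
    show "transpose_mat (X0 * B) = X0 * B" using X0B by simp
  qed
  define f where "f i = gam i / sig i" for i
  have DgSi: "Dg * Si = diag_mat n f" unfolding Dg_def Si_def f_def by (simp add: diag_mult_diag)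
  have Gf: "A * pinv B = U * diag_mat n f * transpose_mat V"
  proof -
    have "A * pinv B = U * (Dg * Si * transpose_mat V)"
      unfolding pinvB Aeq Dg_def[symmetric] X0_def
      by (simp add: d assoc_dim YT cancel_left_dim[OF YT])
    also have "\<dots> = U * diag_mat n f * transpose_mat V" using DgSi by (simp add: d assoc_dim)
    finally show ?thesis .
  qed
  have f0: "\<forall>i<n. 0 \<le> f i" using gs sigpos by (simp add: f_def)
  have fadj: "\<forall>i. i + 1 < n \<longrightarrow> f (i+1) \<le> f i"
  proof (intro allI impI)
    fix i assume i: "i + 1 < n"
    have "0 < sig i" "0 < sig (i+1)" using sigpos i by auto
    then show "f (i+1) \<le> f i" using ord i by (simp add: f_def divide_simps mult.commute)
  qed
  have fmono: "\<forall>i j. i \<le> j \<and> j < n \<longrightarrow> f j \<le> f i" by (rule mono_from_adj[OF fadj])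
  have fgap: "\<forall>i<k. f (i+1) < f i"
  proof (intro allI impI)
    fix i assume i: "i < k"
    have "0 < sig i" "0 < sig (i+1)" using sigpos i k by auto
    then show "f (i+1) < f i" using gap i by (simp add: f_def divide_simps mult.commute)
  qed
  have dG: "dim_row (A * pinv B) = m" "dim_col (A * pinv B) = d" using X0c by (simp_all add: pinvB dA)
  have isvd: "is_svd (A * pinv B) U (diag_mat n f) V"
    unfolding is_svd_def
  proof (intro exI[of _ n] conjI)
    show "U \<in> carrier_mat (dim_row (A * pinv B)) n" using U dG by simp
    show "V \<in> carrier_mat (dim_col (A * pinv B)) n" using V dG by simp
    show "\<forall>i<n. \<forall>j<n. i \<noteq> j \<longrightarrow> diag_mat n f $$ (i, j) = 0" by (simp add: diag_mat_index)
    show "\<forall>i<n. 0 \<le> diag_mat n f $$ (i, i)" using f0 by (simp add: diag_mat_index)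
    show "\<forall>i j. i \<le> j \<and> j < n \<longrightarrow> diag_mat n f $$ (j, j) \<le> diag_mat n f $$ (i, i)"
      using fmono by (simp add: diag_mat_index)
  qed (use UU VV Gf in auto)
  have dom: "\<forall>Wk Zk. dominant_sing_vecs (A * pinv B) k Wk Zk \<longrightarrow>
        DEIM Wk = DEIM (first_cols U k) \<and> DEIM Zk = DEIM (first_cols V k)"
  proof (intro allI impI)
    fix Wk Zk assume "dominant_sing_vecs (A * pinv B) k Wk Zk"
    then obtain W S Z where svd: "is_svd (A * pinv B) W S Z" and kW: "k \<le> dim_col W"
      and Wk: "Wk = first_cols W k" and Zk: "Zk = first_cols Z k"
      unfolding dominant_sing_vecs_def by blast
    obtain c where c: "\<forall>j<k. c j \<noteq> 0" and FW: "first_cols W k = first_cols U k * diag_mat k c"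
      and FZ: "first_cols Z k = first_cols V k * diag_mat k c"
      using svd_unique_cols[OF U V UU VV f0 fmono fgap k(2) Gf svd kW] by blast
    have "DEIM Wk = DEIM (first_cols U k)"
      unfolding Wk FW using DEIM_scale[OF _ c, of "first_cols U k" m] first_cols_carrier[of U k] U by simp
    moreover have "DEIM Zk = DEIM (first_cols V k)"
      unfolding Zk FZ using DEIM_scale[OF _ c, of "first_cols V k" d] first_cols_carrier[of V k] V by simp
    ultimately show "DEIM Wk = DEIM (first_cols U k) \<and> DEIM Zk = DEIM (first_cols V k)" ..
  qed
  have part2: "d = n \<and> B = 1\<^sub>m n \<longrightarrow>
      (\<forall>Wk Zk. dominant_sing_vecs A k Wk Zk \<longrightarrow>
        DEIM Wk = DEIM (first_cols U k) \<and> DEIM Zk = DEIM (first_cols Y k) \<and>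
        A * sel_mat n (DEIM (first_cols Y k)) = A * sel_mat n (DEIM Zk) \<and>
        (sel_mat m (DEIM (first_cols U k)))\<^sup>T * A = (sel_mat m (DEIM Wk))\<^sup>T * A)"
  proof (intro impI allI)
    assume dB1: "d = n \<and> B = 1\<^sub>m n"
    have X01: "X0 = 1\<^sub>m n" using X0B dB1 X0c by simp
    have AG: "A * pinv B = A" using pinvB X01 dA by simp
    have Vn: "V \<in> carrier_mat n n" using V dB1 by simp
    have VVT: "V * transpose_mat V = 1\<^sub>m n"
      by (rule mat_mult_left_right_inverse[OF _ Vn VV]) (use Vn in simp)
    have "transpose_mat V = Ds * transpose_mat Y"
    proof -
      have "transpose_mat V = transpose_mat V * B" using dB1 Vn by simp
      also have "\<dots> = Ds * transpose_mat Y"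
        unfolding Beq Ds_def[symmetric] using dB1 by (simp add: d assoc_dim cancel_left_dim[OF VV])
      finally show ?thesis .
    qed
    then have "Si * transpose_mat V = transpose_mat Y"
      by (simp add: d assoc_dim cancel_left_dim[OF SiDs])
    then have "transpose_mat (Si * transpose_mat V) = Y" by simp
    then have Yeq: "Y = V * diag_mat n (\<lambda>i. 1 / sig i)" by (simp add: transpose_dim d Si_def)
    have FY: "first_cols Y k = first_cols V k * diag_mat k (\<lambda>i. 1 / sig i)"
      unfolding Yeq by (rule first_cols_scale[OF Vn]) (use k in simp)
    have DY: "DEIM (first_cols Y k) = DEIM (first_cols V k)"
      unfolding FY using DEIM_scale[of "first_cols V k" n k "\<lambda>i. 1 / sig i"] first_cols_carrier[of V k] Vn signz k by simp
    fix Wk Zk assume "dominant_sing_vecs A k Wk Zk"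
    then have "dominant_sing_vecs (A * pinv B) k Wk Zk" using AG by simp
    then have "DEIM Wk = DEIM (first_cols U k) \<and> DEIM Zk = DEIM (first_cols V k)" using dom by blast
    then show "DEIM Wk = DEIM (first_cols U k) \<and> DEIM Zk = DEIM (first_cols Y k) \<and>
        A * sel_mat n (DEIM (first_cols Y k)) = A * sel_mat n (DEIM Zk) \<and>
        (sel_mat m (DEIM (first_cols U k)))\<^sup>T * A = (sel_mat m (DEIM Wk))\<^sup>T * A"
      using DY by simp
  qed
  have fl: "f = (\<lambda>i. gam i / sig i)" by (rule ext) (simp add: f_def)
  have isvd': "is_svd (A * pinv B) U (diag_mat n (\<lambda>i. gam i / sig i)) V" using isvd unfolding fl .
  show ?thesis using sigpos isvd' dom part2 by (intro conjI)
qed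


end
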